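(* For every $N_0\in\mathbb N_{\ge1}$ and every $d\in\mathbb N_{\ge 1}$ there is a one-sided recommendation problem $T_d$ (in the exposure setting) with $d+1$ items and $N_0(d+1)$ users such that, for every $\theta\in\Theta$, letting $u^\theta$ be the maximizer of $W_\theta$ over $\mathcal U$, and for every choice of $u^{\mathrm{qua},\beta}\in\mathcal U^{\mathrm{qua}}_\beta$ ($\beta>0$): (i) there exists $\beta>0$ such that $u^\theta_{\mathcal N}\succ_L u^{\mathrm{qua},\beta}_{\mathcal N}$ and $u^\theta_{\mathcal I}\succ_L u^{\mathrm{qua},\beta}_{\mathcal I}$; (ii) the limit $L_d=\lim_{\beta\to\infty}\frac{\sum_{i\in\mathcal N}u^{\mathrm{qua},\beta}_i}{\sum_{i\in\mathcal N}u^\theta_i}$ exists, does not depend on the choice of the maximizers, and $L_d\to\frac56$ as $d\to\infty$.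
   Context: One-sided exposure setting: users $\mathcal N=\{1,\dots,|\mathcal N|\}$, items $\mathcal I=\{|\mathcal N|+1,\dots,n\}$, $n=|\mathcal N|+|\mathcal I|$; exposure weights $v\in\mathbb R^{|\mathcal I|}$ with $v_1\ge\dots\ge v_{|\mathcal I|}\ge0$; values $\mu_{ij}\ge0$ for $i\in\mathcal N$, $j\in\mathcal I$. A ranking tensor $P=(P_{ijk})_{i\in\mathcal N,j\in\mathcal I,k\in[|\mathcal I|]}$ is such that each $P_i=(P_{ijk})_{j,k}$ is doubly stochastic; $\mathcal P$ is the set of ranking tensors, $P_{ij}v=\sum_kP_{ijk}v_k$. User utility $u_i(P)=\sum_{j\in\mathcal I}\mu_{ij}P_{ij}v$ ($i\in\mathcal N$); item utility (exposure) $u_j(P)=\sum_{i\in\mathcal N}P_{ij}v$ ($j\in\mathcal I$). $u(P)=(u_i(P))_{i\in[n]}$, $\mathcal U=\{u(P):P\in\mathcal P\}$, $u_{\mathcal N}=(u_i)_{i\in\mathcal N}$, $u_{\mathcal I}=(u_j)_{j\in\mathcal I}$. A recommendation problem is specified by $\mathcal N,\mathcal I,\mu,v$. Lorenz dominance: for $x\in\mathbb R^m$ with increasingly sorted entries $x_{(1)}\le\dots\le x_{(m)}$, let $\bar x_k=\sum_{l\le k}x_{(l)}$; $x\succeq_L y$ iff $\bar x_k\ge\bar y_k$ for all $k$; $x\succ_L y$ iff $x\succeq_L y$ and $\bar x_k>\bar y_k$ for some $k$. Welfare: $\psi(x,\alpha)=x^\alpha$ ($\alpha>0$), $\log x$ ($\alpha=0$),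 $-x^\alpha$ ($\alpha<0$), with $\psi(0,\alpha)=-\infty$ for $\alpha\le0$; $W_\theta(u)=(1-\lambda)\sum_{i\in\mathcal N}\psi(u_i,\alpha_1)+\lambda\sum_{j\in\mathcal I}\psi(u_j,\alpha_2)$ for $\theta=(\lambda,\alpha_1,\alpha_2)$; $\Theta=(0,1)\times(-\infty,1)^2$. Quality-weighted exposure: $q_j=\sum_{i\in\mathcal N}\mu_{ij}$, $Q=\sum_{j\in\mathcal I}q_j$, $E=|\mathcal N|\,\|v\|_1$, $D^{\mathrm{qua}}(u)=\frac1n\sum_{j\in\mathcal I}\big(u_j-\frac{q_jE}{Q}\big)^2$, $F^{\mathrm{qua}}_\beta(u)=\sum_{i\in\mathcal N}u_i-\beta\sqrt{D^{\mathrm{qua}}(u)}$, and $\mathcal U^{\mathrm{qua}}_\beta=\arg\max_{u\in\mathcal U}F^{\mathrm{qua}}_\beta(u)$. *)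

theory Defs
  imports Complex_Main "HOL-Library.Extended_Real"
begin

text \<open>A one-sided recommendation problem: users are indexed by 0..<nusers,
  items by 0..<nitems (the paper's items |N|+1..n are re-indexed from 0);
  mu i j is the value of item j for user i, vexp k the exposure weight of rank k.\<close>

record rec_problem =
  nusers :: nat
  nitems :: nat
  mu :: "nat \<Rightarrow> nat \<Rightarrow> real"
  vexp :: "nat \<Rightarrow> real"

definition valid_problem :: "rec_problem \<Rightarrow> bool" where
  "valid_problem T \<longleftrightarrow>
     (\<forall>i j. i < nusers T \<longrightarrow> j < nitems T \<longrightarrow> 0 \<le> mu T i j) \<and>
     (\<forall>k. k < nitems T \<longrightarrow> 0 \<le> vexp T k) \<and>
     (\<forall>k l. k \<le> l \<longrightarrow> l < nitems T \<longrightarrow> vexp T l \<le> vexp T k)"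

definition doubly_stochastic :: "nat \<Rightarrow> (nat \<Rightarrow> nat \<Rightarrow> real) \<Rightarrow> bool" where
  "doubly_stochastic p A \<longleftrightarrow>
     (\<forall>j k. j < p \<longrightarrow> k < p \<longrightarrow> 0 \<le> A j k) \<and>
     (\<forall>j. j < p \<longrightarrow> (\<Sum>k<p. A j k) = 1) \<and>
     (\<forall>k. k < p \<longrightarrow> (\<Sum>j<p. A j k) = 1)"

definition ranking_tensor :: "rec_problem \<Rightarrow> (nat \<Rightarrow> nat \<Rightarrow> nat \<Rightarrow> real) \<Rightarrow> bool" where
  "ranking_tensor T P \<longleftrightarrow> (\<forall>i. i < nusers T \<longrightarrow> doubly_stochastic (nitems T) (P i))"

definition expo :: "rec_problem \<Rightarrow> (nat \<Rightarrow> nat \<Rightarrow> nat \<Rightarrow> real) \<Rightarrow> nat \<Rightarrow> nat \<Rightarrow> real" where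
  "expo T P i j = (\<Sum>k<nitems T. P i j k * vexp T k)"

definition user_util :: "rec_problem \<Rightarrow> (nat \<Rightarrow> nat \<Rightarrow> nat \<Rightarrow> real) \<Rightarrow> nat \<Rightarrow> real" where
  "user_util T P = (\<lambda>i. if i < nusers T then (\<Sum>j<nitems T. mu T i j * expo T P i j) else 0)"

definition item_util :: "rec_problem \<Rightarrow> (nat \<Rightarrow> nat \<Rightarrow> nat \<Rightarrow> real) \<Rightarrow> nat \<Rightarrow> real" where
  "item_util T P = (\<lambda>j. if j < nitems T then (\<Sum>i<nusers T. expo T P i j) else 0)"

text \<open>A utility profile u is a pair (u_N, u_I) of the user and item utilities.\<close>
type_synonym utility = "(nat \<Rightarrow> real) \<times> (nat \<Rightarrow> real)"

definition utilities :: "rec_problem \<Rightarrow> utility set" where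
  "utilities T = {(user_util T P, item_util T P) | P. ranking_tensor T P}"

definition psi :: "real \<Rightarrow> real \<Rightarrow> ereal" where
  "psi x a = (if a > 0 then ereal (x powr a)
              else if x \<le> 0 then -\<infinity>
              else if a = 0 then ereal (ln x)
              else ereal (- (x powr a)))"

definition welfare :: "rec_problem \<Rightarrow> real \<times> real \<times> real \<Rightarrow> utility \<Rightarrow> ereal" where
  "welfare T \<theta> u = (case \<theta> of (lam, a1, a2) \<Rightarrow>
      ereal (1 - lam) * (\<Sum>i<nusers T. psi (fst u i) a1)
      + ereal lam * (\<Sum>j<nitems T. psi (snd u j) a2))"

definition Theta :: "(real \<times> real \<times> real) set" where
  "Theta = {(lam, a1, a2). 0 < lam \<and> lam < 1 \<and> a1 < 1 \<and> a2 < 1}"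

definition welfare_maximizer :: "rec_problem \<Rightarrow> real \<times> real \<times> real \<Rightarrow> utility \<Rightarrow> bool" where
  "welfare_maximizer T \<theta> u \<longleftrightarrow>
     u \<in> utilities T \<and> (\<forall>u' \<in> utilities T. welfare T \<theta> u' \<le> welfare T \<theta> u)"

definition quality :: "rec_problem \<Rightarrow> nat \<Rightarrow> real" where
  "quality T j = (\<Sum>i<nusers T. mu T i j)"

definition total_quality :: "rec_problem \<Rightarrow> real" where
  "total_quality T = (\<Sum>j<nitems T. quality T j)"

definition total_exposure :: "rec_problem \<Rightarrow> real" where
  "total_exposure T = real (nusers T) * (\<Sum>k<nitems T. \<bar>vexp T k\<bar>)"

definition D_qua :: "rec_problem \<Rightarrow> utility \<Rightarrow> real" where
  "D_qua T u = (1 / real (nusers T + nitems T)) *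
     (\<Sum>j<nitems T. (snd u j - quality T j * total_exposure T / total_quality T)\<^sup>2)"

definition F_qua :: "rec_problem \<Rightarrow> real \<Rightarrow> utility \<Rightarrow> real" where
  "F_qua T \<beta> u = (\<Sum>i<nusers T. fst u i) - \<beta> * sqrt (D_qua T u)"

definition U_qua :: "rec_problem \<Rightarrow> real \<Rightarrow> utility set" where
  "U_qua T \<beta> = {u \<in> utilities T. \<forall>u' \<in> utilities T. F_qua T \<beta> u' \<le> F_qua T \<beta> u}"

definition lorenz_ge :: "real list \<Rightarrow> real list \<Rightarrow> bool" where
  "lorenz_ge xs ys \<longleftrightarrow> length xs = length ys \<and>
     (\<forall>k. 1 \<le> k \<and> k \<le> length xs \<longrightarrow> sum_list (take k (sort ys)) \<le> sum_list (take k (sort xs)))"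

definition lorenz_gt :: "real list \<Rightarrow> real list \<Rightarrow> bool" where
  "lorenz_gt xs ys \<longleftrightarrow> lorenz_ge xs ys \<and>
     (\<exists>k. 1 \<le> k \<and> k \<le> length xs \<and> sum_list (take k (sort ys)) < sum_list (take k (sort xs)))"

definition users_vec :: "rec_problem \<Rightarrow> utility \<Rightarrow> real list" where
  "users_vec T u = map (fst u) [0..<nusers T]"

definition items_vec :: "rec_problem \<Rightarrow> utility \<Rightarrow> real list" where
  "items_vec T u = map (snd u) [0..<nitems T]"

end

theory Submission
  imports Defs "HOL-Library.Multiset"
begin


lemma core_ineq:
  fixes t a :: real
  assumes t: "t > 0" "t \<noteq> 1" and a: "a < 1" "a \<noteq> 0"
  shows "(t powr a - 1) / a < t - 1"
proof -
  define h where "h = (\<lambda>t::real. t - 1 - (t powr a - 1) / a)"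
  have der: "DERIV h s :> 1 - s powr (a - 1)" if "s > 0" for s
  proof -
    have "DERIV h s :> 1 - (a * s powr (a - 1)) / a"
      unfolding h_def using that
      by (auto intro!: derivative_eq_intros)
    thus ?thesis using a by simp
  qed
  have h1: "h 1 = 0" by (simp add: h_def)
  show ?thesis
  proof (cases "t > 1")
    case True
    obtain z where z: "1 < z" "z < t" "h t - h 1 = (t - 1) * (1 - z powr (a - 1))"
      using MVT2[of 1 t h "\<lambda>s. 1 - s powr (a - 1)"] True der by force
    have "z powr (a - 1) < 1" using z a
      by (simp add: powr_less_one)
    hence "h t > 0" using z h1 True by (simp add: mult_pos_pos)
    thus ?thesis by (simp add: h_def)
  next
    case False
    hence tl: "t < 1" using t by simp
    obtain z where z: "t < z" "z < 1" "h 1 - h t = (1 - t) * (1 - z powr (a - 1))"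
      using MVT2[of t 1 h "\<lambda>s. 1 - s powr (a - 1)"] tl t der by force
    have "z powr (a - 1) > 1" using z a t
      using powr_less_mono2_neg[of "a - 1" z 1] by simp
    hence "(1 - t) * (1 - z powr (a - 1)) < 0" using tl by (intro mult_pos_neg) auto
    hence "h t > 0" using z h1 by linarith
    thus ?thesis by (simp add: h_def)
  qed
qed

definition psr :: "real \<Rightarrow> real \<Rightarrow> real" where
  "psr x a = (if a > 0 then x powr a else if a = 0 then ln x else - (x powr a))"

definition cc :: "real \<Rightarrow> real \<Rightarrow> real" where
  "cc x a = (if a = 0 then 1 else \<bar>a\<bar> * x powr a)"

lemma psi_pos: "x > 0 \<Longrightarrow> psi x a = ereal (psr x a)"
  by (simp add: psi_def psr_def)

lemma cc_pos: "x > 0 \<Longrightarrow> cc x a > 0"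
  by (simp add: cc_def)

lemma core_le:
  fixes t a :: real
  assumes t: "t > 0" and a: "a < 1" "a \<noteq> 0"
  shows "(t powr a - 1) / a \<le> t - 1"
  using core_ineq[OF t _ a] by (cases "t = 1") auto

lemma psi_tangent:
  fixes x y a :: real
  assumes y: "y > 0" and x: "x \<ge> 0" and a: "a < 1"
  shows "psi x a \<le> ereal (psr y a + cc y a * (x / y - 1))"
    and "x \<noteq> y \<Longrightarrow> psi x a < ereal (psr y a + cc y a * (x / y - 1))"
proof -
  have main: "psi x a < ereal (psr y a + cc y a * (x / y - 1))" if xy: "x \<noteq> y"
  proof (cases "x = 0")
    case True
    show ?thesis
    proof (cases "a > 0")
      case True
      have "0 < (1 - a) * y powr a" using a y by simp
      thus ?thesis using True \<open>x = 0\<close> y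
        by (simp add: psi_def psr_def cc_def algebra_simps)
    next
      case False
      thus ?thesis using \<open>x = 0\<close> by (simp add: psi_def)
    qed
  next
    case False
    hence xp: "x > 0" using x by simp
    define t where "t = x / y"
    have tp: "t > 0" and t1: "t \<noteq> 1" using xp y xy by (auto simp: t_def)
    have xt: "x = y * t" using y by (simp add: t_def)
    have pw: "x powr a = y powr a * t powr a" using xt y tp by (simp add: powr_mult)
    show ?thesis
    proof (cases "a = 0")
      case True
      have "ln t < t - 1"
      proof -
        define s where "s = sqrt t"
        have sp: "s > 0" and s1: "s \<noteq> 1" and ts: "t = s * s" using tp t1 by (auto simp: s_def)
        have "ln s \<le> s - 1" using ln_le_minus_one sp by blast
        moreover have "ln t = 2 * ln s" using ts sp by (simp add: ln_mult)
        moreover have "(s - 1) * (s - 1) > 0" using s1 by (simp add: zero_less_mult_iff) linarith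
        ultimately show ?thesis using ts by (simp add: algebra_simps)
      qed
      hence "ln x < ln y + (t - 1)" using xt y tp by (simp add: ln_mult)
      thus ?thesis using True xp by (simp add: psi_def psr_def cc_def t_def)
    next
      case an: False
      have k: "(t powr a - 1) / a < t - 1" using core_ineq[OF tp t1 a an] .
      have yp: "y powr a > 0" using y by simp
      show ?thesis
      proof (cases "a > 0")
        case True
        have "t powr a - 1 < a * (t - 1)" using k True by (simp add: divide_less_eq mult.commute)
        hence "y powr a * (t powr a - 1) < y powr a * (a * (t - 1))" using yp by simp
        hence "x powr a < y powr a + a * y powr a * (t - 1)" using pw by (simp add: algebra_simps)
        thus ?thesis using True xp by (simp add: psi_def psr_def cc_def t_def)
      next
        case False
        hence an2: "a < 0" using an by simp
        have "a * (t - 1) < t powr a - 1" using k an2 by (simp add: divide_less_eq mult.commute)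
        hence "y powr a * (a * (t - 1)) < y powr a * (t powr a - 1)" using yp by simp
        hence "- (x powr a) < - (y powr a) + (- a) * y powr a * (t - 1)" using pw by (simp add: algebra_simps)
        thus ?thesis using an2 xp by (simp add: psi_def psr_def cc_def t_def)
      qed
    qed
  qed
  show "x \<noteq> y \<Longrightarrow> psi x a < ereal (psr y a + cc y a * (x / y - 1))" using main .
  show "psi x a \<le> ereal (psr y a + cc y a * (x / y - 1))"
  proof (cases "x = y")
    case True thus ?thesis using y by (simp add: psi_pos)
  next
    case False thus ?thesis using main by (simp add: less_imp_le)
  qed
qed



lemma avg_take:
  fixes zs :: "real list"
  assumes s: "sorted zs" and k: "k \<le> length zs"
  shows "real (length zs) * sum_list (take k zs) \<le> real k * sum_list zs"
proof (cases "k = 0 \<or> k = length zs")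
  case True thus ?thesis by auto
next
  case False
  define A where "A = take k zs"
  define B where "B = drop k zs"
  have zs: "zs = A @ B" by (simp add: A_def B_def)
  have lA: "length A = k" using k by (simp add: A_def)
  have Bne: "B \<noteq> []" using False k by (simp add: B_def)
  define t where "t = hd B"
  have st: "sorted (A @ B)" using s zs by simp
  have tB: "t \<in> set B" using Bne by (simp add: t_def)
  have Ale: "\<forall>a\<in>set A. a \<le> t" using st tB by (simp add: sorted_append)
  have Bge: "\<forall>b\<in>set B. t \<le> b"
  proof -
    obtain b0 B' where "B = b0 # B'" using Bne by (cases B) auto
    moreover have "sorted B" using st by (simp add: sorted_append)
    ultimately show ?thesis by (auto simp: t_def)
  qed
  have sA: "sum_list A \<le> real k * t"
  proof -
    have "sum_list A = sum_list (map (\<lambda>x. x) A)" by simp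
    also have "\<dots> \<le> sum_list (map (\<lambda>x. t) A)" by (rule sum_list_mono) (use Ale in auto)
    also have "\<dots> = real k * t" using lA by (simp add: sum_list_triv)
    finally show ?thesis .
  qed
  have sB: "real (length B) * t \<le> sum_list B"
  proof -
    have "real (length B) * t = sum_list (map (\<lambda>x. t) B)" by (simp add: sum_list_triv)
    also have "\<dots> \<le> sum_list (map (\<lambda>x. x) B)" by (rule sum_list_mono) (use Bge in auto)
    finally show ?thesis by simp
  qed
  have e1: "real (length zs) = real k + real (length B)" using zs lA by simp
  have e2: "real (length B) * sum_list A \<le> real (length B) * (real k * t)"
    using sA by (intro mult_left_mono) auto
  have e3: "real k * (real (length B) * t) \<le> real k * sum_list B"
    using sB by (intro mult_left_mono) auto
  have "real (length zs) * sum_list A = real k * sum_list A + real (length B) * sum_list A"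
    unfolding e1 by (rule distrib_right)
  also have "\<dots> \<le> real k * sum_list A + real k * sum_list B" using e2 e3 by (simp add: mult.left_commute)
  also have "\<dots> = real k * sum_list zs" using zs by (simp add: distrib_left)
  finally show ?thesis by (simp add: A_def)
qed

lemma sum_list_sort_real: "sum_list (sort (xs :: real list)) = sum_list xs"
  by (metis mset_sort sum_mset_sum_list)

lemma lorenz_ge_rep:
  fixes ys :: "real list"
  assumes l: "length ys = n" and s: "sum_list ys \<le> real n * c"
  shows "lorenz_ge (replicate n c) ys"
  unfolding lorenz_ge_def
proof (intro conjI allI impI)
  show "length (replicate n c) = length ys" using l by simp
  fix k assume k: "1 \<le> k \<and> k \<le> length (replicate n c)"
  have np: "real n > 0" using k by simp
  have "real n * sum_list (take k (sort ys)) \<le> real k * sum_list (sort ys)"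
    using avg_take[of "sort ys" k] k l by simp
  also have "\<dots> = real k * sum_list ys" by (simp add: sum_list_sort_real)
  also have "\<dots> \<le> real k * (real n * c)" using s by (intro mult_left_mono) auto
  finally have "sum_list (take k (sort ys)) \<le> real k * c" using np
    by (simp add: algebra_simps)
  moreover have "sum_list (take k (sort (replicate n c))) = real k * c"
    using k by (simp add: sorted_sort_id sum_list_replicate)
  ultimately show "sum_list (take k (sort ys)) \<le> sum_list (take k (sort (replicate n c)))" by simp
qed

lemma lorenz_gt_rep_total:
  fixes ys :: "real list"
  assumes l: "length ys = n" and s: "sum_list ys < real n * c" and n: "1 \<le> n"
  shows "lorenz_gt (replicate n c) ys"
  unfolding lorenz_gt_def
proof
  show "lorenz_ge (replicate n c) ys" using lorenz_ge_rep[OF l] s by simp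
  show "\<exists>k\<ge>1. k \<le> length (replicate n c) \<and> sum_list (take k (sort ys)) < sum_list (take k (sort (replicate n c)))"
    using n l s by (intro exI[of _ n]) (simp add: sorted_sort_id sum_list_replicate sum_list_sort_real)
qed

lemma lorenz_gt_rep_min:
  fixes ys :: "real list"
  assumes l: "length ys = n" and s: "sum_list ys \<le> real n * c" and j: "j < n" and yj: "ys ! j < c"
  shows "lorenz_gt (replicate n c) ys"
  unfolding lorenz_gt_def
proof
  show "lorenz_ge (replicate n c) ys" using lorenz_ge_rep[OF l s] .
  have "length (sort ys) > 0" using j l by simp
  then obtain z zs where zz: "sort ys = z # zs" by (cases "sort ys") auto
  have "ys ! j \<in> set (sort ys)" using j l by simp
  moreover have "sorted (z # zs)" using zz by (metis sorted_sort)
  ultimately have "z \<le> ys ! j" using zz by auto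
  hence "sum_list (take 1 (sort ys)) < c" using zz yj by simp
  moreover have "sum_list (take 1 (sort (replicate n c))) = c"
    using j by (simp add: sorted_sort_id sum_list_replicate)
  ultimately show "\<exists>k\<ge>1. k \<le> length (replicate n c) \<and> sum_list (take k (sort ys)) < sum_list (take k (sort (replicate n c)))"
    using j by (intro exI[of _ 1]) simp
qed

lemma ereal_sum_le:
  assumes "finite A" "\<And>j. j \<in> A \<Longrightarrow> f j \<le> ereal (g j)"
  shows "sum f A \<le> ereal (sum g A)"
proof -
  have "sum f A \<le> (\<Sum>j\<in>A. ereal (g j))" using assms by (intro sum_mono) auto
  thus ?thesis by simp
qed

lemma ereal_sum_less:
  assumes fin: "finite A" and le: "\<And>j. j \<in> A \<Longrightarrow> f j \<le> ereal (g j)"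
    and j0: "j0 \<in> A" and lt: "f j0 < ereal (g j0)"
  shows "sum f A < ereal (sum g A)"
proof -
  have r1: "sum f A = f j0 + sum f (A - {j0})" using fin j0 by (simp add: sum.remove)
  have r2: "sum g A = g j0 + sum g (A - {j0})" using fin j0 by (simp add: sum.remove)
  have le2: "sum f (A - {j0}) \<le> ereal (sum g (A - {j0}))" using fin le by (intro ereal_sum_le) auto
  show ?thesis
  proof (cases "f j0")
    case (real a)
    thus ?thesis unfolding r1 r2 using lt le2 by (cases "sum f (A - {j0})") simp_all
  next
    case PInf thus ?thesis using lt by simp
  next
    case MInf
    thus ?thesis unfolding r1 r2 using le2 by (cases "sum f (A - {j0})") simp_all
  qed
qed

lemma ereal_comb_less:
  fixes X Y :: ereal
  assumes c: "c1 > 0" "c2 > 0" and X: "X \<le> ereal x" and Y: "Y \<le> ereal y"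
    and s: "X < ereal x \<or> Y < ereal y"
  shows "ereal c1 * X + ereal c2 * Y < ereal (c1 * x + c2 * y)"
proof (cases X)
  case (real a)
  note Xa = real
  show ?thesis
  proof (cases Y)
    case (real b)
    have "a \<le> x" "b \<le> y" "a < x \<or> b < y" using X Y s Xa real by auto
    hence "c1 * a + c2 * b < c1 * x + c2 * y" using c
      by (smt (verit) mult_strict_left_mono mult_left_mono)
    thus ?thesis using Xa real by simp
  next
    case PInf thus ?thesis using Y by simp
  next
    case MInf thus ?thesis using Xa c by simp
  qed
next
  case PInf thus ?thesis using X by simp
next
  case MInf
  thus ?thesis using c Y by (cases Y) simp_all
qed



definition bb :: "nat \<Rightarrow> real" where "bb d = real (d + 1) / (3 * real d)"

definition TT :: "nat \<Rightarrow> nat \<Rightarrow> rec_problem" where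
  "TT N0 d = \<lparr> nusers = N0 * (d + 1), nitems = d + 1,
     mu = (\<lambda>i j. if j = i div N0 then 1 else if j = 0 then bb d else 0),
     vexp = (\<lambda>k. if k = 0 then 1 else 0) \<rparr>"

lemma group_sum:
  fixes g :: "nat \<Rightarrow> real"
  assumes "N0 > 0"
  shows "(\<Sum>i<N0 * n. g (i div N0)) = real N0 * (\<Sum>l<n. g l)"
proof -
  have "(\<Sum>i<N0 * n. g (i div N0)) = (\<Sum>l<n. \<Sum>i\<in>{l * N0..<l * N0 + N0}. g (i div N0))"
    using sum.nat_group[of "\<lambda>i. g (i div N0)" N0 n] by (simp add: mult.commute)
  also have "\<dots> = (\<Sum>l<n. real N0 * g l)"
  proof (rule sum.cong[OF refl])
    fix l
    have "\<forall>i\<in>{l * N0..<l * N0 + N0}. i div N0 = l" using assms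
      by (auto intro!: div_nat_eqI simp: algebra_simps)
    hence "(\<Sum>i\<in>{l * N0..<l * N0 + N0}. g (i div N0)) = (\<Sum>i\<in>{l * N0..<l * N0 + N0}. g l)"
      by (intro sum.cong) auto
    thus "(\<Sum>i\<in>{l * N0..<l * N0 + N0}. g (i div N0)) = real N0 * g l" by simp
  qed
  finally show ?thesis by (simp add: sum_distrib_left)
qed

locale prob =
  fixes N0 d :: nat
  assumes N0: "1 \<le> N0" and d: "1 \<le> d"
begin

abbreviation "T \<equiv> TT N0 d"
abbreviation "b \<equiv> bb d"

lemma T_simps [simp]: "nusers T = N0 * (d + 1)" "nitems T = d + 1"
  "mu T i j = (if j = i div N0 then 1 else if j = 0 then b else 0)"
  "vexp T k = (if k = 0 then 1 else 0)"
  by (simp_all add: TT_def)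

lemma b_nonneg: "0 \<le> b" by (simp add: bb_def)
lemma b_less1: "b < 1" using d by (simp add: bb_def field_simps)
lemma db: "real d * b = real (d + 1) / 3" using d by (simp add: bb_def)

lemma valid: "valid_problem T"
  unfolding valid_problem_def using b_nonneg by auto

lemma expo_eq: "expo T P i j = P i j 0"
  unfolding expo_def by (simp add: if_distrib cong: if_cong)

lemma fi_lt: "i < N0 * (d + 1) \<Longrightarrow> i div N0 < d + 1"
  using N0 by (subst div_less_iff_less_mult) (auto simp: mult.commute)

lemma user_util_eq:
  assumes i: "i < N0 * (d + 1)"
  shows "user_util T P i = P i (i div N0) 0 + (if i div N0 = 0 then 0 else b * P i 0 0)"
proof -
  define f where "f = i div N0"
  have f: "f < d + 1" using fi_lt[OF i] by (simp add: f_def)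
  have "\<And>j. mu T i j * P i j 0 = (if j = f then P i f 0 else 0) + (if j = 0 then (if f = 0 then 0 else b * P i 0 0) else 0)"
    by (auto simp: f_def)
  hence "user_util T P i = (\<Sum>j<d+1. (if j = f then P i f 0 else 0) + (if j = 0 then (if f = 0 then 0 else b * P i 0 0) else 0))"
    using i by (simp add: user_util_def expo_eq)
  also have "\<dots> = P i f 0 + (if f = 0 then 0 else b * P i 0 0)"
    using f by (simp add: sum.distrib)
  finally show ?thesis by (simp add: f_def)
qed

lemma item_util_eq: "j < d + 1 \<Longrightarrow> item_util T P j = (\<Sum>i<N0 * (d + 1). P i j 0)"
  by (simp add: item_util_def expo_eq)

lemma rt_props:
  assumes P: "ranking_tensor T P" and i: "i < N0 * (d + 1)"
  shows "\<And>j. j < d + 1 \<Longrightarrow> 0 \<le> P i j 0" "\<And>j. j < d + 1 \<Longrightarrow> P i j 0 \<le> 1"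
    "(\<Sum>j<d+1. P i j 0) = 1"
proof -
  have ds: "doubly_stochastic (d + 1) (P i)" using P i by (simp add: ranking_tensor_def)
  show nn: "\<And>j. j < d + 1 \<Longrightarrow> 0 \<le> P i j 0" using ds by (simp add: doubly_stochastic_def)
  show "(\<Sum>j<d+1. P i j 0) = 1" using ds by (simp add: doubly_stochastic_def)
  fix j assume j: "j < d + 1"
  have "P i j 0 \<le> (\<Sum>k<d+1. P i j k)"
    using ds j by (intro member_le_sum) (auto simp: doubly_stochastic_def)
  thus "P i j 0 \<le> 1" using ds j by (simp add: doubly_stochastic_def)
qed

definition mkP :: "(nat \<Rightarrow> nat \<Rightarrow> real) \<Rightarrow> nat \<Rightarrow> nat \<Rightarrow> nat \<Rightarrow> real" where
  "mkP x i j k = (if k = 0 then x i j else (1 - x i j) / real d)"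

lemma mkP_rt:
  assumes nn: "\<And>i j. i < N0 * (d + 1) \<Longrightarrow> j < d + 1 \<Longrightarrow> 0 \<le> x i j"
    and s1: "\<And>i. i < N0 * (d + 1) \<Longrightarrow> (\<Sum>j<d+1. x i j) = 1"
  shows "ranking_tensor T (mkP x)"
  unfolding ranking_tensor_def doubly_stochastic_def
proof (intro allI impI conjI)
  fix i assume i: "i < nusers T"
  hence i': "i < N0 * (d + 1)" by simp
  have le1: "x i j \<le> 1" if "j < d + 1" for j
  proof -
    have "x i j \<le> (\<Sum>j<d+1. x i j)" using nn i' that by (intro member_le_sum) auto
    thus ?thesis using s1 i' by simp
  qed
  fix j k
  show "j < nitems T \<Longrightarrow> k < nitems T \<Longrightarrow> 0 \<le> mkP x i j k"
    using nn[OF i'] le1 d by (auto simp: mkP_def)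
next
  fix i j assume i: "i < nusers T" and j: "j < nitems T"
  have "(\<Sum>k<Suc d. mkP x i j k) = x i j + (\<Sum>k<d. (1 - x i j) / real d)"
    by (simp only: sum.lessThan_Suc_shift) (simp add: mkP_def)
  also have "\<dots> = 1" using d by simp
  finally show "(\<Sum>k<nitems T. mkP x i j k) = 1" by simp
next
  fix i k assume i: "i < nusers T" and k: "k < nitems T"
  show "(\<Sum>j<nitems T. mkP x i j k) = 1"
  proof (cases "k = 0")
    case True thus ?thesis using s1 i by (simp add: mkP_def)
  next
    case False
    have "(\<Sum>j<d+1. mkP x i j k) = (\<Sum>j<d+1. (1 - x i j) / real d)"
      using False by (simp add: mkP_def)
    also have "\<dots> = (real (d + 1) - (\<Sum>j<d+1. x i j)) / real d"
      by (simp add: sum_divide_distrib[symmetric] sum_subtractf)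
    also have "\<dots> = 1" using s1 i d by simp
    finally show ?thesis by simp
  qed
qed

lemma mkP_0 [simp]: "mkP x i j 0 = x i j" by (simp add: mkP_def)

end


context prob begin

lemma two_le_sum:
  assumes P: "ranking_tensor T P" and i: "i < N0 * (d + 1)"
    and f: "f < d + 1" "f \<noteq> 0"
  shows "P i f 0 + P i 0 0 \<le> 1"
proof -
  have "(\<Sum>j\<in>{0, f}. P i j 0) \<le> (\<Sum>j<d+1. P i j 0)"
    using rt_props[OF P i] f by (intro sum_mono2) auto
  thus ?thesis using rt_props(3)[OF P i] f by simp
qed

lemma uu_bounds:
  assumes P: "ranking_tensor T P" and i: "i < N0 * (d + 1)"
  shows "0 \<le> user_util T P i" "user_util T P i \<le> 1"
    "user_util T P i \<le> (if i div N0 = 0 then 2 - b else 1) - (1 - b) * P i 0 0"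
proof -
  define f where "f = i div N0"
  have f: "f < d + 1" using fi_lt[OF i] by (simp add: f_def)
  have u: "user_util T P i = P i f 0 + (if f = 0 then 0 else b * P i 0 0)"
    using user_util_eq[OF i] by (simp add: f_def)
  have x0: "0 \<le> P i 0 0" "P i 0 0 \<le> 1" using rt_props[OF P i] by auto
  have xf: "0 \<le> P i f 0" "P i f 0 \<le> 1" using rt_props[OF P i] f by auto
  show "0 \<le> user_util T P i" using u x0 xf b_nonneg by simp
  show "user_util T P i \<le> 1"
  proof (cases "f = 0")
    case True thus ?thesis using u xf by simp
  next
    case False
    have "P i f 0 + P i 0 0 \<le> 1" using two_le_sum[OF P i f False] .
    moreover have "b * P i 0 0 \<le> P i 0 0" using mult_left_le_one_le[OF x0(1) b_nonneg] b_less1 by simp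
    ultimately show ?thesis using u False by simp
  qed
  show "user_util T P i \<le> (if i div N0 = 0 then 2 - b else 1) - (1 - b) * P i 0 0"
  proof (cases "f = 0")
    case True
    have "(2 - b) * P i 0 0 \<le> 2 - b" using x0 b_less1 by (simp add: mult_le_cancel_left1)
    thus ?thesis using u True by (simp add: f_def[symmetric] algebra_simps)
  next
    case False
    have "P i f 0 + P i 0 0 \<le> 1" using two_le_sum[OF P i f False] .
    thus ?thesis using u False by (simp add: f_def[symmetric] algebra_simps)
  qed
qed

lemma items_sum:
  assumes P: "ranking_tensor T P"
  shows "(\<Sum>j<d+1. item_util T P j) = real (N0 * (d + 1))"
proof -
  have "(\<Sum>j<d+1. item_util T P j) = (\<Sum>j<d+1. \<Sum>i<N0 * (d + 1). P i j 0)"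
    by (simp add: item_util_eq)
  also have "\<dots> = (\<Sum>i<N0 * (d + 1). \<Sum>j<d+1. P i j 0)" by (rule sum.swap)
  also have "\<dots> = (\<Sum>i<N0 * (d + 1). 1)" using rt_props(3)[OF P] by simp
  finally show ?thesis by simp
qed

lemma item_nonneg:
  assumes P: "ranking_tensor T P" and j: "j < d + 1"
  shows "0 \<le> item_util T P j"
proof -
  have "0 \<le> (\<Sum>i<N0 * (d + 1). P i j 0)" using rt_props(1)[OF P _ j] by (intro sum_nonneg) auto
  thus ?thesis using j by (simp add: item_util_eq)
qed

definition xs :: "nat \<Rightarrow> nat \<Rightarrow> real" where "xs i j = (if j = i div N0 then 1 else 0)"

lemma xs_rt: "ranking_tensor T (mkP xs)"
proof (rule mkP_rt)
  fix i assume "i < N0 * (d + 1)"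
  hence "i div N0 < d + 1" by (rule fi_lt)
  thus "(\<Sum>j<d+1. xs i j) = 1" unfolding xs_def by (subst sum.delta) auto
qed (auto simp: xs_def)

lemma xs_user: "i < N0 * (d + 1) \<Longrightarrow> user_util T (mkP xs) i = 1"
  by (simp add: user_util_eq xs_def)

lemma xs_item: "j < d + 1 \<Longrightarrow> item_util T (mkP xs) j = real N0"
proof -
  assume j: "j < d + 1"
  have "item_util T (mkP xs) j = (\<Sum>i<N0 * (d + 1). (\<lambda>l. if j = l then 1 else 0) (i div N0))"
    using j by (simp add: item_util_eq xs_def eq_commute)
  also have "\<dots> = real N0 * (\<Sum>l<d+1. if j = l then 1 else 0)"
    using N0 by (intro group_sum) simp
  finally show ?thesis using j by simp
qed

lemma wm_char:
  assumes th: "\<theta> \<in> Theta" and wm: "welfare_maximizer T \<theta> u"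
  shows "\<exists>P. ranking_tensor T P \<and> u = (user_util T P, item_util T P) \<and>
     (\<forall>i < N0 * (d + 1). user_util T P i = 1) \<and> (\<forall>j < d + 1. item_util T P j = real N0)"
proof -
  obtain lam a1 a2 where th_eq: "\<theta> = (lam, a1, a2)" by (cases \<theta>) auto
  have lam: "0 < lam" "lam < 1" and a: "a1 < 1" "a2 < 1" using th by (auto simp: Theta_def th_eq)
  obtain P where P: "ranking_tensor T P" and u: "u = (user_util T P, item_util T P)"
    using wm by (auto simp: welfare_maximizer_def utilities_def)
  define n where "n = N0 * (d + 1)"
  define m where "m = d + 1"
  define X where "X = (\<Sum>i<n. psi (user_util T P i) a1)"
  define Y where "Y = (\<Sum>j<m. psi (item_util T P j) a2)"
  have N0p: "real N0 > 0" using N0 by simp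
  have Xle_each: "psi (user_util T P i) a1 \<le> ereal (psr 1 a1)"
    and Xlt_each: "user_util T P i \<noteq> 1 \<Longrightarrow> psi (user_util T P i) a1 < ereal (psr 1 a1)"
    if i: "i < n" for i
  proof -
    have i': "i < N0 * (d + 1)" using i by (simp add: n_def)
    note ub = uu_bounds[OF P i']
    have "cc 1 a1 * (user_util T P i / 1 - 1) \<le> 0" using cc_pos[of 1 a1] ub(2)
      by (simp add: mult_nonneg_nonpos)
    hence e: "ereal (psr 1 a1 + cc 1 a1 * (user_util T P i / 1 - 1)) \<le> ereal (psr 1 a1)" by simp
    show "psi (user_util T P i) a1 \<le> ereal (psr 1 a1)"
      using psi_tangent(1)[of 1 "user_util T P i" a1] ub(1) a e by (meson order.trans zero_less_one)
    show "psi (user_util T P i) a1 < ereal (psr 1 a1)" if "user_util T P i \<noteq> 1"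
      using psi_tangent(2)[of 1 "user_util T P i" a1] ub(1) a e that by (meson order.strict_trans2 zero_less_one)
  qed
  define g where "g j = psr (real N0) a2 + cc (real N0) a2 * (item_util T P j / real N0 - 1)" for j
  have Yle_each: "psi (item_util T P j) a2 \<le> ereal (g j)"
    and Ylt_each: "item_util T P j \<noteq> real N0 \<Longrightarrow> psi (item_util T P j) a2 < ereal (g j)"
    if j: "j < m" for j
    using psi_tangent[of "real N0" "item_util T P j" a2] N0p item_nonneg[OF P] j a
    by (auto simp: g_def m_def)
  have gsum: "(\<Sum>j<m. g j) = real m * psr (real N0) a2"
  proof -
    have "(\<Sum>j<m. g j) = real m * psr (real N0) a2 + cc (real N0) a2 * ((\<Sum>j<m. item_util T P j) / real N0 - real m)"
      by (simp add: g_def sum.distrib sum_distrib_left[symmetric] sum_subtractf sum_divide_distrib[symmetric])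
    also have "(\<Sum>j<m. item_util T P j) / real N0 = real m"
      using items_sum[OF P] N0p by (simp add: m_def field_simps)
    finally show ?thesis by simp
  qed
  have Xle: "X \<le> ereal (real n * psr 1 a1)"
    using ereal_sum_le[of "{..<n}" "\<lambda>i. psi (user_util T P i) a1" "\<lambda>_. psr 1 a1"] Xle_each
    by (simp add: X_def)
  have Yle: "Y \<le> ereal (real m * psr (real N0) a2)"
    using ereal_sum_le[of "{..<m}" "\<lambda>j. psi (item_util T P j) a2" g] Yle_each gsum
    by (simp add: Y_def)
  define ustar where "ustar = (user_util T (mkP xs), item_util T (mkP xs))"
  have us_in: "ustar \<in> utilities T" using xs_rt by (auto simp: utilities_def ustar_def)
  have Wstar: "welfare T \<theta> ustar = ereal ((1 - lam) * (real n * psr 1 a1) + lam * (real m * psr (real N0) a2))"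
  proof -
    have "(\<Sum>i<n. psi (user_util T (mkP xs) i) a1) = (\<Sum>i<n. ereal (psr 1 a1))"
      by (intro sum.cong) (auto simp: xs_user n_def psi_pos)
    moreover have "(\<Sum>j<m. psi (item_util T (mkP xs) j) a2) = (\<Sum>j<m. ereal (psr (real N0) a2))"
      using N0p by (intro sum.cong) (auto simp: xs_item m_def psi_pos)
    ultimately show ?thesis by (simp add: welfare_def th_eq ustar_def n_def m_def)
  qed
  have Wu: "welfare T \<theta> u = ereal (1 - lam) * X + ereal lam * Y"
    by (simp add: welfare_def th_eq u X_def Y_def n_def m_def)
  have ge: "welfare T \<theta> ustar \<le> welfare T \<theta> u" using wm us_in by (simp add: welfare_maximizer_def)
  have allu: "\<forall>i < N0 * (d + 1). user_util T P i = 1"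
  proof (rule ccontr)
    assume "\<not> ?thesis"
    then obtain i where i: "i < n" "user_util T P i \<noteq> 1" by (auto simp: n_def)
    have "X < ereal (real n * psr 1 a1)"
      using ereal_sum_less[of "{..<n}" "\<lambda>i. psi (user_util T P i) a1" "\<lambda>_. psr 1 a1" i] Xle_each Xlt_each i
      by (simp add: X_def)
    hence "welfare T \<theta> u < welfare T \<theta> ustar"
      unfolding Wu Wstar using lam Xle Yle by (intro ereal_comb_less) auto
    thus False using ge by simp
  qed
  have alli: "\<forall>j < d + 1. item_util T P j = real N0"
  proof (rule ccontr)
    assume "\<not> ?thesis"
    then obtain j where j: "j < m" "item_util T P j \<noteq> real N0" by (auto simp: m_def)
    have "Y < ereal (real m * psr (real N0) a2)"
      using ereal_sum_less[of "{..<m}" "\<lambda>j. psi (item_util T P j) a2" g j] Yle_each Ylt_each j gsum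
      by (simp add: Y_def)
    hence "welfare T \<theta> u < welfare T \<theta> ustar"
      unfolding Wu Wstar using lam Xle Yle by (intro ereal_comb_less) auto
    thus False using ge by simp
  qed
  show ?thesis using P u allu alli by blast
qed

end


context prob begin

definition S0 :: real where "S0 = real N0 * (1 + real d * (3/4 + b/4))"
definition tgt :: "nat \<Rightarrow> real" where
  "tgt j = (if j = 0 then real N0 * (real d + 4) / 4 else 3 * real N0 / 4)"

lemma sum_Suc_first: "(\<Sum>l<Suc n. f l) = f 0 + (\<Sum>l<n. f (Suc l))"
  by (rule sum.lessThan_Suc_shift)

lemma texp: "total_exposure T = real (N0 * (d + 1))"
proof -
  have "(\<Sum>k<d+1. \<bar>if k = 0 then 1 else 0 :: real\<bar>) = 1"
    by (simp add: if_distrib cong: if_cong)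
  thus ?thesis by (simp add: total_exposure_def)
qed

lemma quality_eq:
  assumes j: "j < d + 1"
  shows "quality T j = (if j = 0 then real N0 * (1 + real d * b) else real N0)"
proof -
  have "quality T j = (\<Sum>i<N0 * (d + 1). (\<lambda>l. if j = l then 1 else if j = 0 then b else 0) (i div N0))"
    by (simp add: quality_def)
  also have "\<dots> = real N0 * (\<Sum>l<d+1. if j = l then 1 else if j = 0 then b else 0)"
    using N0 by (intro group_sum) simp
  also have "(\<Sum>l<d+1. if j = l then 1 else if j = 0 then b else 0) = (if j = 0 then 1 + real d * b else 1)"
  proof (cases "j = 0")
    case True
    thus ?thesis by (simp only: Suc_eq_plus1[symmetric] sum_Suc_first) simp
  next
    case False
    thus ?thesis using j by (simp add: sum.delta)
  qed
  finally show ?thesis by simp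
qed

lemma tquality: "total_quality T = real N0 * (1 + real d * b + real d)"
proof -
  have "total_quality T = (\<Sum>j<Suc d. quality T j)" by (simp add: total_quality_def)
  also have "\<dots> = quality T 0 + (\<Sum>j<d. quality T (Suc j))" by (rule sum_Suc_first)
  also have "\<dots> = real N0 * (1 + real d * b) + (\<Sum>j<d. real N0)"
    by (simp add: quality_eq)
  finally show ?thesis by (simp add: algebra_simps)
qed

lemma target_eq:
  assumes j: "j < d + 1"
  shows "quality T j * total_exposure T / total_quality T = tgt j"
proof -
  have N0p: "real N0 > 0" using N0 by simp
  have dp: "real d \<ge> 1" using d by simp
  have q: "total_quality T = real N0 * (4 * real (d + 1) / 3)" using tquality db by simp
  have q0: "quality T 0 = real N0 * (real d + 4) / 3"
  proof -
    have "quality T 0 = real N0 * (1 + real (d + 1) / 3)" using quality_eq[of 0] db by simp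
    thus ?thesis by (simp add: field_simps)
  qed
  have nz: "real N0 * (4 * real (d + 1) / 3) \<noteq> 0" using N0p by simp
  show ?thesis
  proof (cases "j = 0")
    case True
    have "real N0 * (real d + 4) / 3 * real (N0 * (d + 1)) = real N0 * (real d + 4) / 4 * (real N0 * (4 * real (d + 1) / 3))"
      by (simp add: field_simps)
    thus ?thesis unfolding True q0 texp q tgt_def using nz
      by (subst divide_eq_eq) simp
  next
    case False
    have "real N0 * real (N0 * (d + 1)) = 3 * real N0 / 4 * (real N0 * (4 * real (d + 1) / 3))"
      by (simp add: field_simps)
    thus ?thesis unfolding quality_eq[OF j] texp q tgt_def using nz False
      by (subst divide_eq_eq) simp
  qed
qed

definition y0 :: "nat \<Rightarrow> nat \<Rightarrow> real" where
  "y0 l j = (if l = 0 then (if j = 0 then 1 else 0) else if j = l then 3/4 else if j = 0 then 1/4 else 0)"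
definition x0 :: "nat \<Rightarrow> nat \<Rightarrow> real" where "x0 i j = y0 (i div N0) j"

lemma y0_sum: "l < d + 1 \<Longrightarrow> (\<Sum>j<d+1. y0 l j) = 1"
proof (cases "l = 0")
  case True thus ?thesis by (simp add: y0_def)
next
  case False
  assume l: "l < d + 1"
  have "(\<Sum>j<d+1. y0 l j) = (\<Sum>j<d+1. (if j = l then 3/4 else 0) + (if j = 0 then 1/4 else 0))"
    using False by (intro sum.cong) (auto simp: y0_def)
  also have "\<dots> = 1" using l by (simp add: sum.distrib sum.delta)
  finally show ?thesis .
qed

lemma x0_rt: "ranking_tensor T (mkP x0)"
proof (rule mkP_rt)
  fix i assume "i < N0 * (d + 1)"
  hence "i div N0 < d + 1" by (rule fi_lt)
  thus "(\<Sum>j<d+1. x0 i j) = 1" unfolding x0_def by (rule y0_sum)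
qed (auto simp: x0_def y0_def)

lemma x0_item: "j < d + 1 \<Longrightarrow> item_util T (mkP x0) j = tgt j"
proof -
  assume j: "j < d + 1"
  have "item_util T (mkP x0) j = (\<Sum>i<N0 * (d + 1). (\<lambda>l. y0 l j) (i div N0))"
    using j by (simp add: item_util_eq x0_def)
  also have "\<dots> = real N0 * (\<Sum>l<d+1. y0 l j)"
    using N0 by (intro group_sum) simp
  also have "(\<Sum>l<d+1. y0 l j) = (if j = 0 then 1 + real d / 4 else 3 / 4)"
  proof (cases "j = 0")
    case True
    thus ?thesis by (simp only: Suc_eq_plus1[symmetric] sum_Suc_first) (simp add: y0_def)
  next
    case False
    have "(\<Sum>l<d+1. y0 l j) = (\<Sum>l<d+1. if l = j then 3/4 else 0)"
      using False by (intro sum.cong) (auto simp: y0_def)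
    thus ?thesis using j False by (simp add: sum.delta)
  qed
  finally show ?thesis by (simp add: tgt_def field_simps)
qed

lemma x0_users: "(\<Sum>i<N0 * (d + 1). user_util T (mkP x0) i) = S0"
proof -
  have "(\<Sum>i<N0 * (d + 1). user_util T (mkP x0) i) =
        (\<Sum>i<N0 * (d + 1). (\<lambda>l. if l = 0 then 1 else 3/4 + b/4) (i div N0))"
    by (intro sum.cong) (auto simp: user_util_eq x0_def y0_def)
  also have "\<dots> = real N0 * (\<Sum>l<d+1. if l = 0 then 1 else 3/4 + b/4)"
    using N0 by (intro group_sum) simp
  also have "(\<Sum>l<d+1. if l = 0 then 1 else 3/4 + b/4) = 1 + real d * (3/4 + b/4)"
    by (simp only: Suc_eq_plus1[symmetric] sum_Suc_first) simp
  finally show ?thesis by (simp add: S0_def)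
qed

lemma x0_D: "D_qua T (user_util T (mkP x0), item_util T (mkP x0)) = 0"
  unfolding D_qua_def by (simp add: x0_item target_eq)

lemma users_UB:
  assumes P: "ranking_tensor T P"
  shows "(\<Sum>i<N0 * (d + 1). user_util T P i) \<le>
     S0 + sqrt (real (N0 * (d + 1) + (d + 1))) * sqrt (D_qua T (user_util T P, item_util T P))"
proof -
  define e0 where "e0 = item_util T P 0"
  have "(\<Sum>i<N0 * (d + 1). user_util T P i) \<le>
        (\<Sum>i<N0 * (d + 1). (\<lambda>l. if l = 0 then 2 - b else 1) (i div N0) - (1 - b) * P i 0 0)"
    using uu_bounds(3)[OF P] by (intro sum_mono) auto
  also have "\<dots> = (\<Sum>i<N0 * (d + 1). (\<lambda>l. if l = 0 then 2 - b else 1) (i div N0)) - (1 - b) * (\<Sum>i<N0 * (d + 1). P i 0 0)"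
    by (simp add: sum_subtractf sum_distrib_left)
  also have "\<dots> = real N0 * (\<Sum>l<d+1. if l = 0 then 2 - b else 1) - (1 - b) * e0"
    using N0 by (subst group_sum) (auto simp: e0_def item_util_eq)
  also have "(\<Sum>l<d+1. if l = 0 then 2 - b else 1) = 2 - b + real d"
    by (simp only: Suc_eq_plus1[symmetric] sum_Suc_first) simp
  finally have s1: "(\<Sum>i<N0 * (d + 1). user_util T P i) \<le> real N0 * (2 - b + real d) - (1 - b) * e0" .
  have alg: "real N0 * (2 - b + real d) = S0 + (1 - b) * tgt 0"
    by (simp add: S0_def tgt_def field_simps)
  define Sq where "Sq = (\<Sum>j<d+1. (item_util T P j - tgt j)\<^sup>2)"
  have "(1 - b) * (tgt 0 - e0) \<le> \<bar>e0 - tgt 0\<bar>"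
  proof -
    have "(1 - b) * (tgt 0 - e0) \<le> (1 - b) * \<bar>e0 - tgt 0\<bar>" using b_less1 by (intro mult_left_mono) auto
    also have "\<dots> \<le> \<bar>e0 - tgt 0\<bar>" using b_nonneg b_less1 by (intro mult_left_le_one_le) auto
    finally show ?thesis .
  qed
  also have "\<bar>e0 - tgt 0\<bar> = sqrt ((e0 - tgt 0)\<^sup>2)" by simp
  also have "\<dots> \<le> sqrt Sq"
    unfolding Sq_def e0_def by (intro real_sqrt_le_mono member_le_sum[of 0 "{..<d+1}" "\<lambda>j. (item_util T P j - tgt j)\<^sup>2"]) auto
  also have "Sq = real (N0 * (d + 1) + (d + 1)) * D_qua T (user_util T P, item_util T P)"
    by (simp add: D_qua_def Sq_def target_eq del: of_nat_add)
  also have "sqrt \<dots> = sqrt (real (N0 * (d + 1) + (d + 1))) * sqrt (D_qua T (user_util T P, item_util T P))"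
    by (rule real_sqrt_mult)
  finally have "(1 - b) * (tgt 0 - e0) \<le> sqrt (real (N0 * (d + 1) + (d + 1))) * sqrt (D_qua T (user_util T P, item_util T P))" .
  thus ?thesis using s1 alg by (simp add: algebra_simps)
qed

end


context prob begin

lemma D_eq: "j < d + 1 \<Longrightarrow> True" by simp

lemma qua_opt:
  assumes \<beta>: "\<beta> > sqrt (real (N0 * (d + 1) + (d + 1)))" and uq: "uq \<in> U_qua T \<beta>"
  shows "\<exists>P. ranking_tensor T P \<and> uq = (user_util T P, item_util T P) \<and>
     (\<Sum>i<N0 * (d + 1). user_util T P i) = S0 \<and> (\<forall>j<d+1. item_util T P j = tgt j)"
proof -
  define K where "K = sqrt (real (N0 * (d + 1) + (d + 1)))"
  have K0: "K \<ge> 0" by (simp add: K_def)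
  obtain P where P: "ranking_tensor T P" and u: "uq = (user_util T P, item_util T P)"
    using uq by (auto simp: U_qua_def utilities_def)
  define u0 where "u0 = (user_util T (mkP x0), item_util T (mkP x0))"
  have u0in: "u0 \<in> utilities T" using x0_rt by (auto simp: utilities_def u0_def)
  have Fle: "F_qua T \<beta> u0 \<le> F_qua T \<beta> uq" using uq u0in by (simp add: U_qua_def)
  have F0: "F_qua T \<beta> u0 = S0" using x0_users x0_D by (simp add: F_qua_def u0_def)
  define s where "s = (\<Sum>i<N0 * (d + 1). user_util T P i)"
  define D where "D = D_qua T (user_util T P, item_util T P)"
  have Fu: "F_qua T \<beta> uq = s - \<beta> * sqrt D" by (simp add: F_qua_def u s_def D_def)
  have ub: "s \<le> S0 + K * sqrt D" using users_UB[OF P] by (simp add: s_def D_def K_def)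
  have sD: "sqrt D \<ge> 0"
  proof -
    have "D \<ge> 0" unfolding D_def D_qua_def by (intro mult_nonneg_nonneg sum_nonneg) auto
    thus ?thesis by simp
  qed
  have "(\<beta> - K) * sqrt D \<le> 0" using Fle F0 Fu ub by (simp add: algebra_simps)
  moreover have "\<beta> - K > 0" using \<beta> by (simp add: K_def)
  ultimately have "sqrt D = 0" using sD by (simp add: mult_le_0_iff)
  hence D0: "D = 0" by simp
  have ss: "s = S0" using Fle F0 Fu ub \<open>sqrt D = 0\<close> by simp
  have sq0: "(\<Sum>j<d+1. (item_util T P j - tgt j)\<^sup>2) = 0"
    using D0 by (simp add: D_def D_qua_def target_eq del: of_nat_add)
  have "\<forall>j\<in>{..<d+1}. (item_util T P j - tgt j)\<^sup>2 = 0"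
    using sum_nonneg_eq_0_iff[of "{..<d+1}" "\<lambda>j. (item_util T P j - tgt j)\<^sup>2"] sq0 by simp
  hence "\<forall>j<d+1. item_util T P j = tgt j" by simp
  thus ?thesis using P u ss by (auto simp: s_def)
qed

lemma S0_less: "S0 < real (N0 * (d + 1))"
proof -
  have "real d * b < real d" using b_less1 d by simp
  thus ?thesis using N0 by (simp add: S0_def field_simps)
qed

lemma S0_ratio: "S0 / real (N0 * (d + 1)) = 5/6 + inverse (real (Suc d)) / 4"
proof -
  have e: "real d * (3/4 + b/4) = 3 * real d / 4 + (real d * b) / 4" by (simp add: algebra_simps)
  have S0': "S0 = real N0 * (1 + 3 * real d / 4 + real (d + 1) / 12)" unfolding S0_def e db by simp
  have p: "real N0 > 0" using N0 by simp
  have "real N0 + real N0 * real d > 0" using p by (simp add: add_pos_nonneg)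
  hence nz: "1 + real d \<noteq> 0" "real N0 \<noteq> 0" "real N0 + real N0 * real d \<noteq> 0" using p
    by auto
  have r: "S0 = real N0 * (5 * (1 + real d) / 6 + 1 / 4)" unfolding S0' by (simp add: field_simps)
  show ?thesis by (subst divide_eq_eq) (simp add: r nz field_simps)
qed

end

lemma sum_list_map_upt: "sum_list (map f [0..<n]) = sum f {..<n}"
  by (simp add: sum_list_distinct_conv_sum_set atLeast_upt)

theorem proposition2:
  fixes N0 :: nat
  assumes "1 \<le> N0"
  shows "\<exists>T :: nat \<Rightarrow> rec_problem.
    (\<forall>d \<ge> 1. valid_problem (T d) \<and> nitems (T d) = d + 1 \<and> nusers (T d) = N0 * (d + 1)) \<and>
    (\<forall>\<theta> \<in> Theta. \<exists>L :: nat \<Rightarrow> real. (L \<longlonglongrightarrow> 5 / 6) \<and>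
       (\<forall>d \<ge> 1. \<forall>u\<theta> uq.
          welfare_maximizer (T d) \<theta> u\<theta> \<longrightarrow>
          (\<forall>\<beta> > 0. uq \<beta> \<in> U_qua (T d) \<beta>) \<longrightarrow>
          (\<exists>\<beta> > 0. lorenz_gt (users_vec (T d) u\<theta>) (users_vec (T d) (uq \<beta>)) \<and>
                    lorenz_gt (items_vec (T d) u\<theta>) (items_vec (T d) (uq \<beta>))) \<and>
          ((\<lambda>\<beta>. (\<Sum>i<nusers (T d). fst (uq \<beta>) i) / (\<Sum>i<nusers (T d). fst u\<theta> i))
             \<longlongrightarrow> L d) at_top))"
proof (intro exI[of _ "TT N0"] conjI ballI allI impI)
  fix d :: nat assume d: "1 \<le> d"
  interpret prob N0 d using assms d by unfold_locales
  show "valid_problem (TT N0 d)" by (rule valid)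
  show "nitems (TT N0 d) = d + 1" by simp
  show "nusers (TT N0 d) = N0 * (d + 1)" by simp
next
  fix \<theta> assume th: "\<theta> \<in> Theta"
  define L where "L d = 5/6 + inverse (real (Suc d)) / 4" for d :: nat
  show "\<exists>L :: nat \<Rightarrow> real. (L \<longlonglongrightarrow> 5 / 6) \<and>
       (\<forall>d \<ge> 1. \<forall>u\<theta> uq.
          welfare_maximizer (TT N0 d) \<theta> u\<theta> \<longrightarrow>
          (\<forall>\<beta> > 0. uq \<beta> \<in> U_qua (TT N0 d) \<beta>) \<longrightarrow>
          (\<exists>\<beta> > 0. lorenz_gt (users_vec (TT N0 d) u\<theta>) (users_vec (TT N0 d) (uq \<beta>)) \<and>
                    lorenz_gt (items_vec (TT N0 d) u\<theta>) (items_vec (TT N0 d) (uq \<beta>))) \<and>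
          ((\<lambda>\<beta>. (\<Sum>i<nusers (TT N0 d). fst (uq \<beta>) i) / (\<Sum>i<nusers (TT N0 d). fst u\<theta> i))
             \<longlongrightarrow> L d) at_top)"
  proof (intro exI[of _ L] conjI allI impI)
    show "L \<longlonglongrightarrow> 5 / 6"
      unfolding L_def
      using tendsto_add[OF tendsto_const[of "5/6"] tendsto_divide_zero[OF LIMSEQ_inverse_real_of_nat, of 4]]
      by simp
  next
    fix d :: nat and u\<theta> and uq :: "real \<Rightarrow> utility"
    assume d: "1 \<le> d" and wm: "welfare_maximizer (TT N0 d) \<theta> u\<theta>"
      and uqh: "\<forall>\<beta> > 0. uq \<beta> \<in> U_qua (TT N0 d) \<beta>"
    interpret prob N0 d using assms d by unfold_locales
    define K where "K = sqrt (real (N0 * (d + 1) + (d + 1)))"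
    have K0: "K \<ge> 0" by (simp add: K_def)
    obtain P where P: "ranking_tensor T P" and u: "u\<theta> = (user_util T P, item_util T P)"
      and u1: "\<forall>i < N0 * (d + 1). user_util T P i = 1"
      and i1: "\<forall>j < d + 1. item_util T P j = real N0"
      using wm_char[OF th wm] by blast
    have uvec: "users_vec T u\<theta> = replicate (N0 * (d + 1)) 1"
      by (rule nth_equalityI) (auto simp: users_vec_def u u1 simp del: upt_Suc)
    have ivec: "items_vec T u\<theta> = replicate (d + 1) (real N0)"
      by (rule nth_equalityI) (auto simp: items_vec_def u i1 simp del: upt_Suc replicate_Suc)
    have den: "(\<Sum>i<nusers T. fst u\<theta> i) = real (N0 * (d + 1))"
      using u1 by (simp add: u)
    have qo: "\<exists>P. ranking_tensor T P \<and> uq \<beta> = (user_util T P, item_util T P) \<and>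
       (\<Sum>i<N0 * (d + 1). user_util T P i) = S0 \<and> (\<forall>j<d+1. item_util T P j = tgt j)"
      if "\<beta> > K" for \<beta>
    proof -
      have "\<beta> > 0" using that K0 by simp
      thus ?thesis using qua_opt[of \<beta> "uq \<beta>"] that uqh by (simp add: K_def)
    qed
    show "\<exists>\<beta> > 0. lorenz_gt (users_vec T u\<theta>) (users_vec T (uq \<beta>)) \<and>
                    lorenz_gt (items_vec T u\<theta>) (items_vec T (uq \<beta>))"
    proof (intro exI[of _ "K + 1"] conjI)
      show "K + 1 > 0" using K0 by simp
      obtain Q where Q: "ranking_tensor T Q" and uqe: "uq (K + 1) = (user_util T Q, item_util T Q)"
        and sQ: "(\<Sum>i<N0 * (d + 1). user_util T Q i) = S0" and tQ: "\<forall>j<d+1. item_util T Q j = tgt j"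
        using qo[of "K + 1"] by auto
      show "lorenz_gt (users_vec T u\<theta>) (users_vec T (uq (K + 1)))"
        unfolding uvec
        using lorenz_gt_rep_total[of "users_vec T (uq (K + 1))" "N0 * (d + 1)" 1] sQ S0_less assms
        by (simp add: users_vec_def uqe sum_list_map_upt)
      have isum: "sum_list (items_vec T (uq (K + 1))) \<le> real (d + 1) * real N0"
        unfolding items_vec_def uqe using items_sum[OF Q] by (simp add: sum_list_map_upt algebra_simps)
      have i1': "items_vec T (uq (K + 1)) ! 1 < real N0"
        using tQ d assms by (simp add: items_vec_def uqe nth_append tgt_def)
      show "lorenz_gt (items_vec T u\<theta>) (items_vec T (uq (K + 1)))"
        unfolding ivec
        using lorenz_gt_rep_min[OF _ isum _ i1'] d by (simp add: items_vec_def)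
    qed
    show "((\<lambda>\<beta>. (\<Sum>i<nusers T. fst (uq \<beta>) i) / (\<Sum>i<nusers T. fst u\<theta> i)) \<longlongrightarrow> L d) at_top"
    proof (rule tendsto_eventually)
      show "\<forall>\<^sub>F \<beta> in at_top. (\<Sum>i<nusers T. fst (uq \<beta>) i) / (\<Sum>i<nusers T. fst u\<theta> i) = L d"
        using eventually_gt_at_top[of K]
      proof (rule eventually_mono)
        fix \<beta> assume "\<beta> > K"
        then obtain Q where uqe: "uq \<beta> = (user_util T Q, item_util T Q)"
          and sQ: "(\<Sum>i<N0 * (d + 1). user_util T Q i) = S0" using qo by blast
        show "(\<Sum>i<nusers T. fst (uq \<beta>) i) / (\<Sum>i<nusers T. fst u\<theta> i) = L d"
          unfolding den using sQ S0_ratio by (simp add: uqe L_def)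
      qed
    qed
  qed
qed

end
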